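(* Let $\mathrm{Aut}(K_{C^3(m)^*})$ be the group of permutations of $\{1,\ldots,m\}$ preserving the simplicial complex $K_{C^3(m)^*}$. If $m>5$, this group is generated by $\sigma\colon i\mapsto m+1-i$ and the transposition $\tau=(1\ m)$. If $m=5$, it is generated by the permutation $1\mapsto3,\,2\mapsto4,\,3\mapsto5,\,4\mapsto2,\,5\mapsto1$ and the transposition $(1\ 5)$.
   Context: For a simple polytope $P$ with facets $F_1,\ldots,F_m$, $K_P$ is the simplicial complex on $\{1,\ldots,m\}$ with $\{i_1,\ldots,i_k\}\in K_P$ iff $F_{i_1}\cap\cdots\cap F_{i_k}\neq\emptyset$. $C^3(m)^*$ is the dual of the cyclic $3$-polytope with $m$ vertices, with facets labeled so that the maximal faces of $K_{C^3(m)^*}$ are exactly $\{1,i,i+1\}$ for $i=2,\ldots,m-1$ and $\{i,i+1,m\}$ for $i=1,\ldots,m-2$. *)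

theory Defs
  imports "HOL-Algebra.Sym_Groups" "HOL-Algebra.Generated_Groups"
begin

text \<open>Maximal faces of the simplicial complex K of the dual cyclic 3-polytope with m facets.\<close>
definition cyc_maxfaces :: "nat \<Rightarrow> nat set set" where
  "cyc_maxfaces m = {{1, i, i + 1} | i. 2 \<le> i \<and> i \<le> m - 1}
                  \<union> {{i, i + 1, m} | i. 1 \<le> i \<and> i \<le> m - 2}"

definition K_cyc :: "nat \<Rightarrow> nat set set" where
  "K_cyc m = {F. \<exists>M \<in> cyc_maxfaces m. F \<subseteq> M}"

definition Aut_K :: "nat \<Rightarrow> (nat \<Rightarrow> nat) set" where
  "Aut_K m = {p. p permutes {1..m} \<and> (\<forall>F. F \<in> K_cyc m \<longleftrightarrow> p ` F \<in> K_cyc m)}"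

definition sigma_rev :: "nat \<Rightarrow> nat \<Rightarrow> nat" where
  "sigma_rev m = (\<lambda>i. if i \<in> {1..m} then m + 1 - i else i)"

definition tau_1m :: "nat \<Rightarrow> nat \<Rightarrow> nat" where
  "tau_1m m = transpose 1 m"

definition rho5 :: "nat \<Rightarrow> nat" where
  "rho5 = (\<lambda>i. if i = 1 then 3 else if i = 2 then 4 else if i = 3 then 5
              else if i = 4 then 2 else if i = 5 then 1 else i)"

end

theory Submission
  imports Defs
begin

lemma mf1: "2 \<le> i \<Longrightarrow> i \<le> m - 1 \<Longrightarrow> {1, i, i+1} \<in> cyc_maxfaces m"
  unfolding cyc_maxfaces_def by blast
lemma mf2: "1 \<le> i \<Longrightarrow> i \<le> m - 2 \<Longrightarrow> {i, i+1, m} \<in> cyc_maxfaces m"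
  unfolding cyc_maxfaces_def by blast

lemma inK: "F \<subseteq> M \<Longrightarrow> M \<in> cyc_maxfaces m \<Longrightarrow> F \<in> K_cyc m"
  unfolding K_cyc_def by blast

lemma mf_sub: "M \<in> cyc_maxfaces m \<Longrightarrow> M \<subseteq> {1..m}"
  unfolding cyc_maxfaces_def by auto

lemma finite_mf: "finite (cyc_maxfaces m)"
proof -
  have "cyc_maxfaces m \<subseteq> Pow {1..m}" using mf_sub by blast
  thus ?thesis by (rule finite_subset) simp
qed

lemma adj_iff:
  assumes "m \<ge> 4" "a \<noteq> b"
  shows "{a,b} \<in> K_cyc m \<longleftrightarrow> a \<in> {1..m} \<and> b \<in> {1..m} \<and>
           (a = 1 \<or> b = 1 \<or> a = m \<or> b = m \<or> b = a + 1 \<or> a = b + 1)"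
proof
  assume "{a,b} \<in> K_cyc m"
  then obtain M where M: "M \<in> cyc_maxfaces m" "{a,b} \<subseteq> M" unfolding K_cyc_def by blast
  then show "a \<in> {1..m} \<and> b \<in> {1..m} \<and>
           (a = 1 \<or> b = 1 \<or> a = m \<or> b = m \<or> b = a + 1 \<or> a = b + 1)"
    using assms unfolding cyc_maxfaces_def by auto
next
  assume h: "a \<in> {1..m} \<and> b \<in> {1..m} \<and>
           (a = 1 \<or> b = 1 \<or> a = m \<or> b = m \<or> b = a + 1 \<or> a = b + 1)"
  have sym: "{a,b} = {b,a}" by blast
  have one: "{1,x} \<in> K_cyc m" if "x \<in> {2..m}" for x
  proof (cases "x = m")
    case True
    then show ?thesis using mf2[of 1 m] assms by (intro inK[of _ "{1,1+1,m}"]) auto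
  next
    case False
    then show ?thesis using mf1[of x m] that by (intro inK[of _ "{1,x,x+1}"]) auto
  qed
  have mm: "{x,m} \<in> K_cyc m" if "x \<in> {1..m-1}" for x
  proof (cases "x = 1")
    case True
    then show ?thesis using mf2[of 1 m] assms by (intro inK[of _ "{1,1+1,m}"]) auto
  next
    case False
    then show ?thesis using mf2[of "x-1" m] that by (intro inK[of _ "{x-1,x-1+1,m}"]) auto
  qed
  have cons: "{x,x+1} \<in> K_cyc m" if "1 \<le> x" "x + 1 \<le> m" for x
  proof (cases "x = 1")
    case True
    have "{1,2} \<in> K_cyc m" using one[of 2] assms by auto
    then show ?thesis using True by (simp add: numeral_2_eq_2)
  next
    case False
    show ?thesis
    proof (cases "x + 1 = m")
      case True
      then show ?thesis using mm[of x] that by auto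
    next
      case False
      then show ?thesis using mf1[of x m] that \<open>x \<noteq> 1\<close> by (intro inK[of _ "{1,x,x+1}"]) auto
    qed
  qed
  show "{a,b} \<in> K_cyc m"
    using h assms one[of a] one[of b] mm[of a] mm[of b] cons[of a] cons[of b] sym
    by (auto simp: insert_commute)
qed


lemma aut_pair:
  assumes "p \<in> Aut_K m"
  shows "{a,b} \<in> K_cyc m \<longleftrightarrow> {p a, p b} \<in> K_cyc m"
proof -
  have "\<forall>F. F \<in> K_cyc m \<longleftrightarrow> p ` F \<in> K_cyc m" using assms by (simp add: Aut_K_def)
  then have "{a,b} \<in> K_cyc m \<longleftrightarrow> p ` {a,b} \<in> K_cyc m" by blast
  then show ?thesis by simp
qed

lemma aut_perm: "p \<in> Aut_K m \<Longrightarrow> p permutes {1..m}"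
  unfolding Aut_K_def by auto

lemma aut_I:
  assumes pp: "p permutes {1..m}" and mf: "\<And>M. M \<in> cyc_maxfaces m \<Longrightarrow> p ` M \<in> cyc_maxfaces m"
  shows "p \<in> Aut_K m"
proof -
  have inj: "inj p" using pp permutes_inj by blast
  have ij: "inj_on ((`) p) (cyc_maxfaces m)"
    using inj by (auto simp: inj_on_def inj_image_eq_iff)
  have sub: "(`) p ` cyc_maxfaces m \<subseteq> cyc_maxfaces m" using mf by blast
  have eq: "(`) p ` cyc_maxfaces m = cyc_maxfaces m"
    using card_subset_eq[OF finite_mf sub] card_image[OF ij] by simp
  have "F \<in> K_cyc m \<longleftrightarrow> p ` F \<in> K_cyc m" for F
  proof
    assume "F \<in> K_cyc m"
    then obtain M where "M \<in> cyc_maxfaces m" "F \<subseteq> M" unfolding K_cyc_def by blast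
    then show "p ` F \<in> K_cyc m" using mf by (intro inK[of _ "p ` M"]) auto
  next
    assume "p ` F \<in> K_cyc m"
    then obtain M where M: "M \<in> cyc_maxfaces m" "p ` F \<subseteq> M" unfolding K_cyc_def by blast
    then obtain M0 where M0: "M0 \<in> cyc_maxfaces m" "M = p ` M0" using eq by (metis imageE)
    then have "F \<subseteq> M0" using M inj by (simp add: inj_image_subset_iff)
    then show "F \<in> K_cyc m" using M0 by (intro inK)
  qed
  then show ?thesis using pp unfolding Aut_K_def by blast
qed

lemma aut_subgroup: "subgroup (Aut_K m) (sym_group m)"
proof (rule group.subgroupI[OF sym_group_is_group])
  show "Aut_K m \<subseteq> carrier (sym_group m)" by (auto simp: Aut_K_def sym_group_carrier)
  show "Aut_K m \<noteq> {}"
  proof -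
    have "id \<in> Aut_K m" unfolding Aut_K_def by (auto simp: permutes_id)
    then show ?thesis by blast
  qed
next
  fix a assume a: "a \<in> Aut_K m"
  then have ac: "a \<in> carrier (sym_group m)" by (auto simp: Aut_K_def sym_group_carrier)
  have ap: "a permutes {1..m}" using a by (simp add: Aut_K_def)
  have "inv' a \<in> Aut_K m"
  proof -
    have "F \<in> K_cyc m \<longleftrightarrow> inv' a ` F \<in> K_cyc m" for F
    proof -
      have "a ` (inv' a ` F) = F" using ap
        by (simp add: image_comp permutes_inverses(1) image_ident o_def)
      moreover have "\<forall>F. F \<in> K_cyc m \<longleftrightarrow> a ` F \<in> K_cyc m" using a by (simp add: Aut_K_def)
      ultimately show ?thesis by (metis (no_types))
    qed
    then show ?thesis using permutes_inv[OF ap] unfolding Aut_K_def by blast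
  qed
  then show "inv\<^bsub>sym_group m\<^esub> a \<in> Aut_K m" using ac by simp
next
  fix a b assume "a \<in> Aut_K m" "b \<in> Aut_K m"
  then have pa: "a permutes {1..m}" "b permutes {1..m}"
    and ka: "\<forall>F. F \<in> K_cyc m \<longleftrightarrow> a ` F \<in> K_cyc m"
    and kb: "\<forall>F. F \<in> K_cyc m \<longleftrightarrow> b ` F \<in> K_cyc m" by (simp_all add: Aut_K_def)
  have "F \<in> K_cyc m \<longleftrightarrow> (a \<circ> b) ` F \<in> K_cyc m" for F
  proof -
    have "(a \<circ> b) ` F = a ` (b ` F)" by (simp add: image_comp)
    then show ?thesis using ka kb by metis
  qed
  then show "a \<otimes>\<^bsub>sym_group m\<^esub> b \<in> Aut_K m"
    unfolding Aut_K_def sym_group_mult using permutes_compose[OF pa(2) pa(1)] by blast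
qed

lemma sigma_inv: "sigma_rev m (sigma_rev m x) = x"
  unfolding sigma_rev_def by auto

lemma sigma_perm: "sigma_rev m permutes {1..m}"
  unfolding permutes_def
proof (intro conjI allI impI)
  fix x :: nat assume "x \<notin> {1..m}" then show "sigma_rev m x = x" by (auto simp: sigma_rev_def)
next
  fix y show "\<exists>!x. sigma_rev m x = y"
    by (rule ex1I[of _ "sigma_rev m y"]) (metis sigma_inv)+
qed

lemma sigma_val: "x \<in> {1..m} \<Longrightarrow> sigma_rev m x = m + 1 - x"
  by (simp add: sigma_rev_def)

lemma sigma_aut: assumes "m \<ge> 4" shows "sigma_rev m \<in> Aut_K m"
proof (rule aut_I[OF sigma_perm])
  fix M assume "M \<in> cyc_maxfaces m"
  then consider i where "M = {1,i,i+1}" "2 \<le> i" "i \<le> m - 1"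
    | i where "M = {i,i+1,m}" "1 \<le> i" "i \<le> m - 2"
    unfolding cyc_maxfaces_def by blast
  then show "sigma_rev m ` M \<in> cyc_maxfaces m"
  proof cases
    case 1
    have e: "sigma_rev m ` M = {m - i, m - i + 1, m}"
      using 1 assms by (auto simp: sigma_val)
    show ?thesis unfolding e using 1 assms by (intro mf2) auto
  next
    case 2
    have e: "sigma_rev m ` M = {1, m - i, m - i + 1}"
      using 2 assms by (auto simp: sigma_val)
    show ?thesis unfolding e using 2 assms by (intro mf1) auto
  qed
qed

lemma tau_perm: "m \<ge> 1 \<Longrightarrow> tau_1m m permutes {1..m}"
  unfolding tau_1m_def by (rule permutes_swap_id) auto

lemma tau_aut: assumes "m \<ge> 4" shows "tau_1m m \<in> Aut_K m"
proof (rule aut_I[OF tau_perm])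
  show "m \<ge> 1" using assms by simp
  fix M assume "M \<in> cyc_maxfaces m"
  then consider i where "M = {1,i,i+1}" "2 \<le> i" "i \<le> m - 1"
    | i where "M = {i,i+1,m}" "1 \<le> i" "i \<le> m - 2"
    unfolding cyc_maxfaces_def by blast
  then show "tau_1m m ` M \<in> cyc_maxfaces m"
  proof cases
    case 1
    show ?thesis
    proof (cases "i = m - 1")
      case True
      have "tau_1m m ` M = M" using 1 True assms by (auto simp: tau_1m_def transpose_def)
      then show ?thesis using 1 mf1 by simp
    next
      case False
      have e: "tau_1m m ` M = {i, i + 1, m}" using 1 False assms by (auto simp: tau_1m_def transpose_def)
      show ?thesis unfolding e using 1 False by (intro mf2) auto
    qed
  next
    case 2
    show ?thesis
    proof (cases "i = 1")
      case True
      have "tau_1m m ` M = M" using 2 True assms by (auto simp: tau_1m_def transpose_def)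
      then show ?thesis using 2 mf2 by simp
    next
      case False
      have e: "tau_1m m ` M = {1, i, i + 1}" using 2 False assms by (auto simp: tau_1m_def transpose_def)
      show ?thesis unfolding e using 2 False assms by (intro mf1) auto
    qed
  qed
qed

lemma mf5: "cyc_maxfaces 5 = {{1,2,3},{1,3,4},{1,4,5},{1,2,5},{2,3,5},{3,4,5}}"
proof -
  have a: "{x::nat. 2 \<le> x \<and> x \<le> 5 - 1} = {2,3,4}" by auto
  have b: "{x::nat. 1 \<le> x \<and> x \<le> 5 - 2} = {1,2,3}" by auto
  have c: "{{1::nat, i, i + 1} |i. 2 \<le> i \<and> i \<le> 5 - 1} = (\<lambda>i. {1,i,i+1}) ` {x::nat. 2 \<le> x \<and> x \<le> 5 - 1}" by blast
  have d: "{{i::nat, i + 1, 5} |i. 1 \<le> i \<and> i \<le> 5 - 2} = (\<lambda>i. {i,i+1,5}) ` {x::nat. 1 \<le> x \<and> x \<le> 5 - 2}" by blast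
  have e: "(\<lambda>i. {i,i+1,5::nat}) ` {1,2,3} = {{1,2,5},{2,3,5},{3,4,5}}"
    by (simp add: eval_nat_numeral)
  show ?thesis unfolding cyc_maxfaces_def c d a b e by (simp add: insert_commute)
qed

lemma rho5_perm: "rho5 permutes {1..5}"
  unfolding permutes_def
proof (intro conjI allI impI)
  fix x :: nat assume "x \<notin> {1..5}" then show "rho5 x = x" by (auto simp: rho5_def)
next
  fix y
  define r where "r = (if y = 3 then 1 else if y = 4 then 2 else if y = 5 then 3
              else if y = 2 then 4 else if y = 1 then 5 else (y::nat))"
  show "\<exists>!x. rho5 x = y"
    by (rule ex1I[of _ r]) (auto simp: r_def rho5_def split: if_splits)
qed

lemma rho5_aut: "rho5 \<in> Aut_K 5"
proof (rule aut_I[OF rho5_perm])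
  fix M assume "M \<in> cyc_maxfaces 5"
  then have "M \<in> {{1,2,3},{1,3,4},{1,4,5},{1,2,5},{2,3,5},{3,4,5}}" by (simp only: mf5)
  moreover have "rho5 ` {1,2,3} = {3,4,5}" by (auto simp: rho5_def)
  moreover have "rho5 ` {1,3,4} = {2,3,5}" by (auto simp: rho5_def)
  moreover have "rho5 ` {1,4,5} = {1,2,3}" by (auto simp: rho5_def)
  moreover have "rho5 ` {1,2,5} = {1,3,4}" by (auto simp: rho5_def)
  moreover have "rho5 ` {2,3,5} = {1,4,5}" by (auto simp: rho5_def)
  moreover have "rho5 ` {3,4,5} = {1,2,5}" by (auto simp: rho5_def)
  ultimately show "rho5 ` M \<in> cyc_maxfaces 5" unfolding mf5 by (elim insertE emptyE) simp_all
qed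

lemma path_inc:
  fixes p :: "nat \<Rightarrow> nat"
  assumes inj: "inj p"
    and step: "\<And>i. 2 \<le> i \<Longrightarrow> i + 1 \<le> n \<Longrightarrow> p (i+1) = p i + 1 \<or> p i = p (i+1) + 1"
    and s: "p 3 = p 2 + 1"
  shows "2 + k \<le> n \<Longrightarrow> p (2 + k) = p 2 + k"
proof (induction k rule: less_induct)
  case (less k)
  consider "k = 0" | "k = 1" | "k \<ge> 2" by arith
  then show ?case
  proof cases
    case 1 then show ?thesis by simp
  next
    case 2 then show ?thesis using s by (simp add: numeral_3_eq_3)
  next
    case 3
    have l1: "k-1 < k" "2+(k-1) \<le> n" using 3 less(2) by auto
    have a: "p (2 + (k-1)) = p 2 + (k-1)" using less(1)[OF l1] .
    have l2: "k-2 < k" "2+(k-2) \<le> n" using 3 less(2) by auto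
    have b: "p (2 + (k-2)) = p 2 + (k-2)" using less(1)[OF l2] .
    have c: "p (2+(k-1)+1) = p (2+(k-1)) + 1 \<or> p (2+(k-1)) = p (2+(k-1)+1) + 1"
      using step[of "2+(k-1)"] less(2) 3 by simp
    have k1: "2 + (k-1) + 1 = 2 + k" using 3 by simp
    show ?thesis
    proof (rule ccontr)
      assume "p (2 + k) \<noteq> p 2 + k"
      then have "p (2 + k) = p (2 + (k-2))" using a b c k1 3 by auto
      then have "2 + k = 2 + (k - 2)" using inj by (simp add: inj_eq)
      then show False using 3 by simp
    qed
  qed
qed

lemma path_dec:
  fixes p :: "nat \<Rightarrow> nat"
  assumes inj: "inj p"
    and step: "\<And>i. 2 \<le> i \<Longrightarrow> i + 1 \<le> n \<Longrightarrow> p (i+1) = p i + 1 \<or> p i = p (i+1) + 1"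
    and s: "p 2 = p 3 + 1"
  shows "2 + k \<le> n \<Longrightarrow> p (2 + k) + k = p 2"
proof (induction k rule: less_induct)
  case (less k)
  consider "k = 0" | "k = 1" | "k \<ge> 2" by arith
  then show ?case
  proof cases
    case 1 then show ?thesis by simp
  next
    case 2 then show ?thesis using s by (simp add: numeral_3_eq_3)
  next
    case 3
    have l1: "k-1 < k" "2+(k-1) \<le> n" using 3 less(2) by auto
    have a: "p (2 + (k-1)) + (k-1) = p 2" using less(1)[OF l1] .
    have l2: "k-2 < k" "2+(k-2) \<le> n" using 3 less(2) by auto
    have b: "p (2 + (k-2)) + (k-2) = p 2" using less(1)[OF l2] .
    have c: "p (2+(k-1)+1) = p (2+(k-1)) + 1 \<or> p (2+(k-1)) = p (2+(k-1)+1) + 1"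
      using step[of "2+(k-1)"] less(2) 3 by simp
    have k1: "2 + (k-1) + 1 = 2 + k" using 3 by simp
    show ?thesis
    proof (rule ccontr)
      assume "p (2 + k) + k \<noteq> p 2"
      then have "p (2 + k) = p (2 + (k-2))" using a b c k1 3 by auto
      then have "2 + k = 2 + (k - 2)" using inj by (simp add: inj_eq)
      then show False using 3 by simp
    qed
  qed
qed

definition univ :: "nat \<Rightarrow> nat \<Rightarrow> bool" where
  "univ m v = (\<forall>w\<in>{1..m}. w \<noteq> v \<longrightarrow> {v,w} \<in> K_cyc m)"

lemma univ_iff:
  assumes "m > 5" "v \<in> {1..m}"
  shows "univ m v \<longleftrightarrow> v = 1 \<or> v = m"
proof
  assume u: "univ m v"
  show "v = 1 \<or> v = m"
  proof (rule ccontr)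
    assume nv: "\<not> (v = 1 \<or> v = m)"
    show False
    proof (cases "v \<ge> 4")
      case True
      have "{v,2} \<in> K_cyc m" using u True assms unfolding univ_def by auto
      then show False using adj_iff[of m v 2] True nv assms by auto
    next
      case False
      have "{v,5} \<in> K_cyc m" using u False assms unfolding univ_def by auto
      then show False using adj_iff[of m v 5] False nv assms by auto
    qed
  qed
next
  assume "v = 1 \<or> v = m"
  then show "univ m v" using assms unfolding univ_def by (auto simp: adj_iff)
qed

lemma univ_pres:
  assumes p: "p \<in> Aut_K m" and v: "v \<in> {1..m}" and u: "univ m v"
  shows "univ m (p v)"
  unfolding univ_def
proof (intro ballI impI)
  fix w assume w: "w \<in> {1..m}" "w \<noteq> p v"
  have pp: "p permutes {1..m}" using p by (rule aut_perm)
  define w' where "w' = inv' p w"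
  have w'1: "p w' = w" unfolding w'_def using pp by (simp add: permutes_inverses(1))
  have w'2: "w' \<in> {1..m}" unfolding w'_def using permutes_in_image[OF permutes_inv[OF pp]] w(1) by blast
  have "w' \<noteq> v" using w w'1 by auto
  then have "{v,w'} \<in> K_cyc m" using u w'2 unfolding univ_def by auto
  then show "{p v, w} \<in> K_cyc m" using aut_pair[OF p] w'1 by auto
qed

lemma aut_big:
  assumes m: "m > 5" and p: "p \<in> Aut_K m"
  shows "p = id \<or> p = tau_1m m \<or> p = sigma_rev m \<or> p = tau_1m m \<circ> sigma_rev m"
proof -
  have pp: "p permutes {1..m}" using p by (rule aut_perm)
  have inj: "inj p" using pp by (rule permutes_inj)
  have inr: "\<And>x. x \<in> {1..m} \<Longrightarrow> p x \<in> {1..m}" using permutes_in_image[OF pp] by blast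
  have out: "\<And>x. x \<notin> {1..m} \<Longrightarrow> p x = x" using permutes_not_in[OF pp] by blast
  have u: "\<And>v. v \<in> {1..m} \<Longrightarrow> v = 1 \<or> v = m \<Longrightarrow> p v = 1 \<or> p v = m"
  proof -
    fix v assume v: "v \<in> {1..m}" "v = 1 \<or> v = m"
    have "univ m v" using univ_iff[OF m v(1)] v(2) by simp
    then have "univ m (p v)" by (rule univ_pres[OF p v(1)])
    then show "p v = 1 \<or> p v = m" using univ_iff[OF m inr[OF v(1)]] by simp
  qed
  have p1: "p 1 = 1 \<or> p 1 = m" using u[of 1] m by auto
  have pm: "p m = 1 \<or> p m = m" using u[of m] m by auto
  have p1m: "p 1 \<noteq> p m" using inj m by (auto simp: inj_eq)
  have mid: "2 \<le> p i \<and> p i \<le> m - 1" if "2 \<le> i" "i \<le> m - 1" for i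
  proof -
    have "p i \<in> {1..m}" using inr that by auto
    moreover have "p i \<noteq> p 1" "p i \<noteq> p m" using inj that m by (auto simp: inj_eq)
    ultimately show ?thesis using p1 pm p1m by auto
  qed
  have step: "p (i+1) = p i + 1 \<or> p i = p (i+1) + 1" if "2 \<le> i" "i + 1 \<le> m - 1" for i
  proof -
    have "{i, i+1} \<in> K_cyc m" using adj_iff[of m i "i+1"] m that by auto
    then have "{p i, p (i+1)} \<in> K_cyc m" using aut_pair[OF p] by blast
    moreover have "p i \<noteq> p (i+1)" using inj by (auto simp: inj_eq)
    ultimately have "p i \<in> {1..m} \<and> p (i+1) \<in> {1..m} \<and> (p i = 1 \<or> p (i+1) = 1 \<or> p i = m \<or> p (i+1) = m \<or> p (i+1) = p i + 1 \<or> p i = p (i+1) + 1)"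
      using adj_iff[of m "p i" "p (i+1)"] m by auto
    moreover have "2 \<le> p i \<and> p i \<le> m - 1" "2 \<le> p (i+1) \<and> p (i+1) \<le> m - 1"
      using mid that by auto
    ultimately show ?thesis by auto
  qed
  have s23: "p 3 = p 2 + 1 \<or> p 2 = p 3 + 1" using step[of 2] m by (simp add: numeral_3_eq_3)
  have m2: "2 \<le> m - 1" using m by simp
  have cases_m: "x \<notin> {1..m} \<or> x = 1 \<or> x = m \<or> (2 \<le> x \<and> x \<le> m - 1)" for x by auto
  show ?thesis
    using s23
  proof
    assume inc: "p 3 = p 2 + 1"
    have P: "p (2 + k) = p 2 + k" if "2 + k \<le> m - 1" for k
      using path_inc[OF inj step inc that] by blast
    have "p (2 + (m - 3)) = p 2 + (m - 3)" using P[of "m-3"] m by simp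
    moreover have "2 + (m - 3) = m - 1" using m by simp
    ultimately have "p (m - 1) = p 2 + (m - 3)" by simp
    then have p2: "p 2 = 2" using mid[of 2] mid[of "m-1"] m by (simp; arith)
    have pi: "p i = i" if "2 \<le> i" "i \<le> m - 1" for i
    proof -
      have e: "2 + (i-2) = i" using that by simp
      show ?thesis using P[of "i-2", unfolded e] that p2 by simp
    qed
    show ?thesis
      using p1
    proof
      assume a: "p 1 = 1"
      then have b: "p m = m" using pm p1m by auto
      have "p = id"
      proof
        fix x show "p x = id x" using cases_m[of x] out a b pi by auto
      qed
      then show ?thesis by simp
    next
      assume a: "p 1 = m"
      then have b: "p m = 1" using pm p1m by auto
      have "p = tau_1m m"
      proof
        fix x show "p x = tau_1m m x" using cases_m[of x] out a b pi m
          by (auto simp: tau_1m_def transpose_def)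
      qed
      then show ?thesis by simp
    qed
  next
    assume dec: "p 2 = p 3 + 1"
    have P: "p (2 + k) + k = p 2" if "2 + k \<le> m - 1" for k
      using path_dec[OF inj step dec that] by blast
    have "p (2 + (m - 3)) + (m - 3) = p 2" using P[of "m-3"] m by simp
    moreover have "2 + (m - 3) = m - 1" using m by simp
    ultimately have "p (m - 1) + (m - 3) = p 2" by simp
    then have p2: "p 2 = m - 1" using mid[of 2] mid[of "m-1"] m by (simp; arith)
    have pi: "p i = m + 1 - i" if "2 \<le> i" "i \<le> m - 1" for i
    proof -
      have e: "2 + (i-2) = i" using that by simp
      show ?thesis using P[of "i-2", unfolded e] that p2 by simp
    qed
    show ?thesis
      using p1
    proof
      assume a: "p 1 = 1"
      then have b: "p m = m" using pm p1m by auto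
      have "p = tau_1m m \<circ> sigma_rev m"
      proof
        fix x show "p x = (tau_1m m \<circ> sigma_rev m) x" using cases_m[of x] out a b pi m
          by (auto simp: tau_1m_def transpose_def sigma_rev_def)
      qed
      then show ?thesis by simp
    next
      assume a: "p 1 = m"
      then have b: "p m = 1" using pm p1m by auto
      have "p = sigma_rev m"
      proof
        fix x show "p x = sigma_rev m x" using cases_m[of x] out a b pi m
          by (auto simp: sigma_rev_def)
      qed
      then show ?thesis by simp
    qed
  qed
qed

lemma gen_comp: "a \<in> generate (sym_group m) S \<Longrightarrow> b \<in> generate (sym_group m) S \<Longrightarrow> a \<circ> b \<in> generate (sym_group m) S"
  using generate.eng[of a "sym_group m" S b] by (simp add: sym_group_mult)

lemma gen_id: "id \<in> generate (sym_group m) S"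
  using generate.one[of "sym_group m" S] by (simp add: sym_group_one)

lemma gen_sub_aut:
  assumes "S \<subseteq> Aut_K m" shows "generate (sym_group m) S \<subseteq> Aut_K m"
  using group.generate_subgroup_incl[OF sym_group_is_group assms aut_subgroup] .

lemma eq5: "(p::nat\<Rightarrow>nat) permutes {1..5} \<Longrightarrow> q permutes {1..5} \<Longrightarrow> p 1 = q 1 \<Longrightarrow> p 2 = q 2 \<Longrightarrow> p 3 = q 3
  \<Longrightarrow> p 4 = q 4 \<Longrightarrow> p 5 = q 5 \<Longrightarrow> p = q"
proof
  fix x assume h: "p permutes {1..5}" "q permutes {1..5}" "p 1 = q 1" "p 2 = q 2" "p 3 = q 3"
    "p 4 = q 4" "p 5 = q 5"
  show "p x = q x"
  proof (cases "x \<in> {1..5}")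
    case True
    then have "x = 1 \<or> x = 2 \<or> x = 3 \<or> x = 4 \<or> x = 5" by auto
    then show ?thesis using h by auto
  next
    case False
    then show ?thesis using permutes_not_in[OF h(1)] permutes_not_in[OF h(2)] by metis
  qed
qed


lemma aut5:
  assumes p: "p \<in> Aut_K 5"
  shows "p \<in> generate (sym_group 5) {rho5, tau_1m 5}"
proof -
  let ?G = "generate (sym_group 5) {rho5, tau_1m 5}"
  have r: "rho5 \<in> ?G" and t: "tau_1m 5 \<in> ?G" by (auto intro: generate.incl)
  have Wg: "{(id), (rho5), (tau_1m 5), (rho5 \<circ> rho5), (tau_1m 5 \<circ> rho5), (rho5 \<circ> tau_1m 5), (rho5 \<circ> rho5 \<circ> rho5), (tau_1m 5 \<circ> rho5 \<circ> rho5), (rho5 \<circ> rho5 \<circ> tau_1m 5), (tau_1m 5 \<circ> rho5 \<circ> tau_1m 5), (rho5 \<circ> rho5 \<circ> rho5 \<circ> rho5), (tau_1m 5 \<circ> rho5 \<circ> rho5 \<circ> rho5)} \<subseteq> ?G"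
    using r t by (auto intro!: gen_comp gen_id)
  have Wa: "{(id), (rho5), (tau_1m 5), (rho5 \<circ> rho5), (tau_1m 5 \<circ> rho5), (rho5 \<circ> tau_1m 5), (rho5 \<circ> rho5 \<circ> rho5), (tau_1m 5 \<circ> rho5 \<circ> rho5), (rho5 \<circ> rho5 \<circ> tau_1m 5), (tau_1m 5 \<circ> rho5 \<circ> tau_1m 5), (rho5 \<circ> rho5 \<circ> rho5 \<circ> rho5), (tau_1m 5 \<circ> rho5 \<circ> rho5 \<circ> rho5)} \<subseteq> Aut_K 5"
    using Wg gen_sub_aut[of "{rho5, tau_1m 5}" 5] rho5_aut tau_aut[of 5] by auto
  have pp: "p permutes {1..5}" using p by (rule aut_perm)
  have inj: "inj p" using pp by (rule permutes_inj)
  have inr: "\<And>x. x \<in> {1..5} \<Longrightarrow> p x \<in> {1..5}" using permutes_in_image[OF pp] by blast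
  have "{2,4} \<notin> K_cyc 5" using adj_iff[of 5 2 4] by simp
  then have n24: "{p 2, p 4} \<notin> K_cyc 5" using aut_pair[OF p] by blast
  have d24: "p 2 \<noteq> p 4" using inj by (auto simp: inj_eq)
  have i: "p 1 \<in> {1..5}" "p 2 \<in> {1..5}" "p 3 \<in> {1..5}" "p 4 \<in> {1..5}" "p 5 \<in> {1..5}"
    using inr by auto
  have c24: "(p 2 = 2 \<and> p 4 = 4) \<or> (p 2 = 4 \<and> p 4 = 2)"
    using adj_iff[of 5 "p 2" "p 4"] n24 d24 i by auto
  have dist: "p 1 \<noteq> p 2" "p 1 \<noteq> p 3" "p 1 \<noteq> p 4" "p 1 \<noteq> p 5" "p 3 \<noteq> p 2" "p 3 \<noteq> p 4"
    "p 3 \<noteq> p 5" "p 5 \<noteq> p 2" "p 5 \<noteq> p 4"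
    using inj by (auto simp: inj_eq)
  have v: "\<And>v::nat. v \<in> {1..5} \<Longrightarrow> v \<noteq> 2 \<Longrightarrow> v \<noteq> 4 \<Longrightarrow> v \<in> {1,3,5}" by auto
  have o: "p 1 \<in> {1,3,5}" "p 3 \<in> {1,3,5}" "p 5 \<in> {1,3,5}"
    using v[OF i(1)] v[OF i(3)] v[OF i(5)] dist c24 by auto
  have "\<exists>q\<in>{(id), (rho5), (tau_1m 5), (rho5 \<circ> rho5), (tau_1m 5 \<circ> rho5), (rho5 \<circ> tau_1m 5), (rho5 \<circ> rho5 \<circ> rho5), (tau_1m 5 \<circ> rho5 \<circ> rho5), (rho5 \<circ> rho5 \<circ> tau_1m 5), (tau_1m 5 \<circ> rho5 \<circ> tau_1m 5), (rho5 \<circ> rho5 \<circ> rho5 \<circ> rho5), (tau_1m 5 \<circ> rho5 \<circ> rho5 \<circ> rho5)}. p 1 = q 1 \<and> p 2 = q 2 \<and> p 3 = q 3 \<and> p 4 = q 4 \<and> p 5 = q 5"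
    using o c24 dist by (simp add: rho5_def tau_1m_def transpose_def) (elim disjE; simp)
  then obtain q where q: "q \<in> {(id), (rho5), (tau_1m 5), (rho5 \<circ> rho5), (tau_1m 5 \<circ> rho5), (rho5 \<circ> tau_1m 5), (rho5 \<circ> rho5 \<circ> rho5), (tau_1m 5 \<circ> rho5 \<circ> rho5), (rho5 \<circ> rho5 \<circ> tau_1m 5), (tau_1m 5 \<circ> rho5 \<circ> tau_1m 5), (rho5 \<circ> rho5 \<circ> rho5 \<circ> rho5), (tau_1m 5 \<circ> rho5 \<circ> rho5 \<circ> rho5)}" "p 1 = q 1" "p 2 = q 2" "p 3 = q 3" "p 4 = q 4" "p 5 = q 5"
    by blast
  have "q permutes {1..5}" using q(1) Wa aut_perm by blast
  then have "p = q" using eq5[OF pp] q by blast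
  then show ?thesis using q(1) Wg by blast
qed

theorem lemma5p3:
  fixes m :: nat
  shows "(m > 5 \<longrightarrow> Aut_K m = generate (sym_group m) {sigma_rev m, tau_1m m})
       \<and> (m = 5 \<longrightarrow> Aut_K m = generate (sym_group m) {rho5, tau_1m m})"
proof (intro conjI impI)
  assume m: "m > 5"
  let ?G = "generate (sym_group m) {sigma_rev m, tau_1m m}"
  have s: "sigma_rev m \<in> ?G" and t: "tau_1m m \<in> ?G" by (auto intro: generate.incl)
  show "Aut_K m = ?G"
  proof
    show "Aut_K m \<subseteq> ?G"
    proof
      fix p assume "p \<in> Aut_K m"
      then have "p = id \<or> p = tau_1m m \<or> p = sigma_rev m \<or> p = tau_1m m \<circ> sigma_rev m"
        using aut_big m by blast
      then show "p \<in> ?G" using s t gen_id gen_comp by blast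
    qed
    show "?G \<subseteq> Aut_K m"
      using gen_sub_aut sigma_aut[of m] tau_aut[of m] m by auto
  qed
next
  assume m: "m = 5"
  show "Aut_K m = generate (sym_group m) {rho5, tau_1m m}"
    unfolding m
  proof
    show "Aut_K 5 \<subseteq> generate (sym_group 5) {rho5, tau_1m 5}" using aut5 by blast
    show "generate (sym_group 5) {rho5, tau_1m 5} \<subseteq> Aut_K 5"
      using gen_sub_aut rho5_aut tau_aut[of 5] by auto
  qed
qed

end
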